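(* Let $F$ be a field, let $L$ be a finite-dimensional left Leibniz algebra over $F$, and let $V \neq 0$ be a finite-dimensional $L$-bimodule, with left action $T$ and right action $S$, i.e. $T_a(v) = av$ and $S_a(v) = va$ for $a \in L$, $v \in V$. Suppose that $T_a$ is a nilpotent linear map of $V$ for every $a \in L$. Then $S_a$ is nilpotent for every $a \in L$, and there exists $v \in V$, $v \neq 0$, such that $T_a(v) = S_a(v) = 0$ for all $a \in L$.
   Context: A left Leibniz algebra over $F$ is a vector space $L$ with a bilinear product $(x,y)\mapsto xy$ satisfying the left Leibniz identity $x(yz) = (xy)z + y(xz)$ for all $x,y,z \in L$. An $L$-bimodule (equivalently, a representation $(S,T)$ of $L$) is a vector space $V$ together with bilinear maps $L \times V \to V$, $(a,v)\mapsto av$, and $V \times L \to V$, $(v,a) \mapsto va$, such that the split extension $X = V \oplus L$ with product $(v+a)(w+b) = (aw + vb) + ab$ (for $v,w\in V$, $a,b \in L$) is a left Leibniz algebra. *)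

theory Defs
  imports Complex_Main "HOL-Library.Product_Plus"
begin

text \<open>Left Leibniz identity x(yz) = (xy)z + y(xz) for a product m.\<close>
definition left_leibniz :: "('a::plus \<Rightarrow> 'a \<Rightarrow> 'a) \<Rightarrow> bool" where
  "left_leibniz m \<longleftrightarrow> (\<forall>x y z. m x (m y z) = m (m x y) z + m y (m x z))"

text \<open>Split extension X = V \<oplus> L, with (v+a)(w+b) = (aw + vb) + ab;
  T is the left action (a,v) \<mapsto> av, S the right action (v,a) \<mapsto> va.\<close>
definition split_ext_mult ::
  "('l \<Rightarrow> 'l \<Rightarrow> 'l) \<Rightarrow> ('l \<Rightarrow> 'v::plus \<Rightarrow> 'v) \<Rightarrow> ('v \<Rightarrow> 'l \<Rightarrow> 'v)
     \<Rightarrow> 'v \<times> 'l \<Rightarrow> 'v \<times> 'l \<Rightarrow> 'v \<times> 'l" where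
  "split_ext_mult m T S x y = (T (snd x) (fst y) + S (fst x) (snd y), m (snd x) (snd y))"

text \<open>A (linear) map is nilpotent if some power of it is zero.\<close>
definition nilpotent_map :: "('v \<Rightarrow> 'v::zero) \<Rightarrow> bool" where
  "nilpotent_map f \<longleftrightarrow> (\<exists>n. (f ^^ n) = (\<lambda>_. 0))"

end

theory Submission
  imports Defs
begin


lemma iter_exit:
  assumes "\<forall>w\<in>W. f w \<in> W" "u \<in> W" "u \<notin> P" "(f^^k) u \<in> P"
  shows "\<exists>w\<in>W. w \<notin> P \<and> f w \<in> P"
  using assms(2-4)
proof (induction k arbitrary: u)
  case 0 then show ?case by simp
next
  case (Suc k)
  show ?case
  proof (cases "f u \<in> P")
    case True then show ?thesis using Suc by blast
  next
    case False
    have "(f^^k) (f u) \<in> P" using Suc(4) by (simp add: funpow_swap1)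
    then show ?thesis using Suc.IH[of "f u"] False assms(1) Suc(2) by blast
  qed
qed

locale engel_ctx = finite_dimensional_vector_space scale Basis
  for scale :: "'f::field \<Rightarrow> 'l::ab_group_add \<Rightarrow> 'l" (infixr \<open>*s\<close> 75) and Basis +
  fixes m :: "'l \<Rightarrow> 'l \<Rightarrow> 'l" and J :: "'l set"
  assumes m_add1: "\<And>x y z. m (x+y) z = m x z + m y z"
    and m_sc1: "\<And>c x z. m (c *s x) z = c *s m x z"
    and m_add2: "\<And>x y z. m z (x+y) = m z x + m z y"
    and m_sc2: "\<And>c x z. m z (c *s x) = c *s m z x"
    and leib: "\<And>x y z. m x (m y z) = m (m x y) z + m y (m x z)"
    and J_sub: "subspace J"
    and J_idl1: "\<And>j u. j \<in> J \<Longrightarrow> m j u \<in> J"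
    and J_idl2: "\<And>j u. j \<in> J \<Longrightarrow> m u j \<in> J"
    and J_sq: "\<And>a. m a a \<in> J"
    and J_anti: "\<And>a b. m a b + m b a \<in> J"
    and J_nil: "\<And>a b. \<exists>k. (m b ^^ k) a \<in> J"
begin

definition Kcond :: "'l set \<Rightarrow> bool" where
  "Kcond K \<longleftrightarrow> subspace K \<and> J \<subseteq> K \<and> (\<forall>x\<in>K. \<forall>y\<in>K. m x y \<in> K)"

definition Ucond :: "('f \<Rightarrow> 'w::ab_group_add \<Rightarrow> 'w) \<Rightarrow> ('l \<Rightarrow> 'w \<Rightarrow> 'w) \<Rightarrow> 'l set \<Rightarrow> 'w set \<Rightarrow> 'w set \<Rightarrow> bool" where
  "Ucond sW \<rho> K U U' \<longleftrightarrow> (\<forall>x\<in>U'. \<forall>y\<in>U'. x+y \<in> U') \<and> (\<forall>c. \<forall>x\<in>U'. sW c x \<in> U')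
     \<and> (\<exists>u\<in>U. u \<notin> U') \<and> (\<forall>a\<in>K. \<forall>u\<in>U. \<rho> a u \<in> U) \<and> (\<forall>a\<in>K. \<forall>u\<in>U'. \<rho> a u \<in> U')
     \<and> (\<forall>j\<in>J. \<forall>u\<in>U. \<rho> j u \<in> U') \<and> (\<forall>a\<in>K. \<forall>u\<in>U. \<exists>k. (\<rho> a ^^ k) u \<in> U')"

definition Concl :: "('l \<Rightarrow> 'w \<Rightarrow> 'w) \<Rightarrow> 'l set \<Rightarrow> 'w set \<Rightarrow> 'w set \<Rightarrow> bool" where
  "Concl \<rho> K U U' \<longleftrightarrow> (\<exists>u\<in>U. u \<notin> U' \<and> (\<forall>b\<in>K. \<rho> b u \<in> U'))"

lemma engel_step:
  fixes sW :: "'f \<Rightarrow> 'w::ab_group_add \<Rightarrow> 'w" and \<rho> :: "'l \<Rightarrow> 'w \<Rightarrow> 'w"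
  assumes IHm: "\<And>K' V V'. dim K' < dim K \<Longrightarrow> Kcond K' \<Longrightarrow> Ucond (*s) m K' V V' \<Longrightarrow> Concl m K' V V'"
  and IHr: "\<And>K' V V'. dim K' < dim K \<Longrightarrow> Kcond K' \<Longrightarrow> Ucond sW \<rho> K' V V' \<Longrightarrow> Concl \<rho> K' V V'"
  and radd: "\<And>x y w. \<rho> (x+y) w = \<rho> x w + \<rho> y w"
  and rsc: "\<And>c x w. \<rho> (c *s x) w = sW c (\<rho> x w)"
  and rhom: "\<And>x y w. \<rho> x (\<rho> y w) = \<rho> (m x y) w + \<rho> y (\<rho> x w)"
  and K: "Kcond K" and U: "Ucond sW \<rho> K U U'"
  shows "Concl \<rho> K U U'"
proof (cases "K \<subseteq> J")
  case True
  then show ?thesis using U unfolding Ucond_def Concl_def by blast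
next
  case False
  let ?P = "\<lambda>H. Kcond H \<and> H \<subseteq> K \<and> H \<noteq> K"
  have PJ: "?P J" using False K J_sub J_idl1 unfolding Kcond_def by auto
  have bnd: "\<forall>H. ?P H \<longrightarrow> dim H < Suc (dim K)" using dim_subset by (simp add: less_Suc_eq_le)
  obtain H where PH: "?P H" and Hmax: "\<And>H'. ?P H' \<Longrightarrow> dim H' \<le> dim H"
    using ex_has_greatest_nat[of ?P J dim "Suc (dim K)", OF PJ bnd] by blast
  have Hsub: "subspace H" and JH: "J \<subseteq> H" and Hcl: "\<And>x y. x\<in>H \<Longrightarrow> y\<in>H \<Longrightarrow> m x y \<in> H"
    using PH unfolding Kcond_def by auto
  have Hadd: "\<And>x y. x\<in>H \<Longrightarrow> y\<in>H \<Longrightarrow> x+y \<in> H" and Hsc: "\<And>c x. x\<in>H \<Longrightarrow> c *s x \<in> H"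
    using Hsub by (auto simp: subspace_def)
  have Hdiff: "\<And>x y. x\<in>H \<Longrightarrow> y\<in>H \<Longrightarrow> x-y \<in> H"
  proof -
    fix x y assume "x \<in> H" "y \<in> H"
    moreover have "x - y = x + (-1) *s y" by simp
    ultimately show "x - y \<in> H" using Hadd Hsc by metis
  qed
  have Ksub: "subspace K" and Kcl: "\<And>x y. x\<in>K \<Longrightarrow> y\<in>K \<Longrightarrow> m x y \<in> K"
    using K unfolding Kcond_def by auto
  have dHK: "dim H < dim K"
  proof -
    have "span H \<subset> span K" using Hsub Ksub PH by (simp add: psubset_eq del: span_eq_iff add: span_eq_iff[THEN iffD2])
    then show ?thesis using dim_psubset by blast
  qed
  have "Ucond (*s) m H K H"
    unfolding Ucond_def
  proof (intro conjI)
    show "\<forall>x\<in>H. \<forall>y\<in>H. x + y \<in> H" "\<forall>c. \<forall>x\<in>H. c *s x \<in> H" using Hsub by (auto simp: subspace_def)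
    show "\<exists>u\<in>K. u \<notin> H" using PH by blast
    show "\<forall>a\<in>H. \<forall>u\<in>K. m a u \<in> K" using PH Kcl by blast
    show "\<forall>a\<in>H. \<forall>u\<in>H. m a u \<in> H" using Hcl by blast
    show "\<forall>j\<in>J. \<forall>u\<in>K. m j u \<in> H" using J_idl1 JH by blast
    show "\<forall>a\<in>H. \<forall>u\<in>K. \<exists>k. (m a ^^ k) u \<in> H" using J_nil JH by blast
  qed
  then obtain a where aK: "a \<in> K" and aH: "a \<notin> H" and aN: "\<And>b. b \<in> H \<Longrightarrow> m b a \<in> H"
    using IHm[OF dHK] PH unfolding Concl_def by blast
  have aN2: "m a b \<in> H" if "b \<in> H" for b
  proof -
    have "m a b = (m a b + m b a) - m b a" by simp
    moreover have "m a b + m b a \<in> H" using J_anti JH by blast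
    ultimately show ?thesis using aN[OF that] Hdiff by metis
  qed
  define H' where "H' = span (insert a H)"
  have H'mem: "x \<in> H' \<longleftrightarrow> (\<exists>c. x - c *s a \<in> H)" for x
  proof -
    have hs: "span H = H" using Hsub by (simp del: span_eq_iff add: span_eq_iff[THEN iffD2])
    show ?thesis unfolding H'_def span_insert hs by simp
  qed
  have H'cl: "m x y \<in> H'" if xH: "x \<in> H'" and yH: "y \<in> H'" for x y
  proof -
    obtain c1 where c1: "x - c1 *s a \<in> H" using xH H'mem by blast
    obtain c2 where c2: "y - c2 *s a \<in> H" using yH H'mem by blast
    define h1 where "h1 = x - c1 *s a"
    define h2 where "h2 = y - c2 *s a"
    have x: "x = h1 + c1 *s a" and y: "y = h2 + c2 *s a" unfolding h1_def h2_def by simp_all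
    have h1H: "h1 \<in> H" and h2H: "h2 \<in> H" using c1 c2 unfolding h1_def h2_def by auto
    have e: "m x y = m h1 h2 + c2 *s m h1 a + (c1 *s m a h2 + c1 *s (c2 *s m a a))"
      unfolding x y m_add1 m_add2 m_sc1 m_sc2 by (simp add: scale_right_distrib add_ac mult.commute)
    have "m h1 h2 + c2 *s m h1 a + (c1 *s m a h2 + c1 *s (c2 *s m a a)) \<in> H"
    proof -
      have 1: "m h1 h2 \<in> H" using Hcl h1H h2H by blast
      have 2: "m h1 a \<in> H" using aN h1H by blast
      have 3: "m a h2 \<in> H" using aN2 h2H by blast
      have 4: "m a a \<in> H" using J_sq JH by blast
      show ?thesis by (intro Hadd Hsc 1 2 3 4)
    qed
    then have "m x y \<in> H" using e by simp
    then have "m x y - 0 *s a \<in> H" by simp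
    then show ?thesis using H'mem by blast
  qed
  have H'K: "H' \<subseteq> K" unfolding H'_def using span_minimal[of "insert a H" K] aK PH Ksub by auto
  have KH': "H' = K"
  proof (rule ccontr)
    assume "H' \<noteq> K"
    then have "?P H'" unfolding Kcond_def using H'cl H'K JH
      by (auto simp: H'_def intro: span_base)
    then have "dim H' \<le> dim H" by (rule Hmax)
    moreover have "dim H < dim H'"
    proof -
      have hs: "span H = H" using Hsub by (simp del: span_eq_iff add: span_eq_iff[THEN iffD2])
      have "span H \<subseteq> span H'" unfolding H'_def span_span using span_mono[of H "insert a H"] by auto
      moreover have "a \<in> span H'" unfolding H'_def span_span by (intro span_base) simp
      ultimately have "span H \<subset> span H'" using aH unfolding hs by blast

      then show ?thesis using dim_psubset by blast
    qed
    ultimately show False by simp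
  qed
  have UH: "Ucond sW \<rho> H U U'" using U PH JH unfolding Ucond_def by blast
  obtain u0 where u0: "u0 \<in> U" "u0 \<notin> U'" "\<forall>b\<in>H. \<rho> b u0 \<in> U'"
    using IHr[OF dHK _ UH] PH unfolding Concl_def by blast
  define W where "W = {u\<in>U. \<forall>b\<in>H. \<rho> b u \<in> U'}"
  have U'add: "\<And>x y. x\<in>U' \<Longrightarrow> y\<in>U' \<Longrightarrow> x+y \<in> U'" and U'sc: "\<And>c x. x\<in>U' \<Longrightarrow> sW c x \<in> U'"
    using U unfolding Ucond_def by auto
  have Winv: "\<forall>w\<in>W. \<rho> a w \<in> W"
  proof
    fix w assume w: "w \<in> W"
    have "\<rho> a w \<in> U" using U aK w unfolding Ucond_def W_def by blast
    moreover have "\<rho> b (\<rho> a w) \<in> U'" if b: "b \<in> H" for b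
    proof -
      have "\<rho> (m b a) w \<in> U'" using aN[OF b] w unfolding W_def by blast
      moreover have "\<rho> a (\<rho> b w) \<in> U'" using w b U aK unfolding W_def Ucond_def by blast
      ultimately show ?thesis using rhom[of b a w] U'add by simp
    qed
    ultimately show "\<rho> a w \<in> W" unfolding W_def by blast
  qed
  obtain k where "(\<rho> a ^^ k) u0 \<in> U'" using U aK u0 unfolding Ucond_def by blast
  then obtain w where w: "w \<in> W" "w \<notin> U'" "\<rho> a w \<in> U'"
    using iter_exit[OF Winv, of u0 U' k] u0 unfolding W_def by blast
  have "\<rho> b w \<in> U'" if bK: "b \<in> K" for b
  proof -
    obtain c where c: "b - c *s a \<in> H" using bK KH' H'mem by blast
    have "\<rho> b w = \<rho> (b - c *s a) w + sW c (\<rho> a w)"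
      using radd[of "b - c *s a" "c *s a" w] rsc by simp
    then show ?thesis using c w U'add U'sc unfolding W_def by auto
  qed
  then show ?thesis using w unfolding Concl_def W_def by blast
qed


lemma engel_m: "Kcond K \<Longrightarrow> Ucond (*s) m K U U' \<Longrightarrow> Concl m K U U'"
proof (induction "dim K" arbitrary: K U U' rule: less_induct)
  case less
  show ?case
    by (rule engel_step[OF less(1) less(1) m_add1 m_sc1 leib less(2) less(3)])
qed

lemma engel_gen:
  fixes sW :: "'f \<Rightarrow> 'w::ab_group_add \<Rightarrow> 'w" and \<rho> :: "'l \<Rightarrow> 'w \<Rightarrow> 'w"
  assumes radd: "\<And>x y w. \<rho> (x+y) w = \<rho> x w + \<rho> y w"
  and rsc: "\<And>c x w. \<rho> (c *s x) w = sW c (\<rho> x w)"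
  and rhom: "\<And>x y w. \<rho> x (\<rho> y w) = \<rho> (m x y) w + \<rho> y (\<rho> x w)"
  shows "Kcond K \<Longrightarrow> Ucond sW \<rho> K U U' \<Longrightarrow> Concl \<rho> K U U'"
proof (induction "dim K" arbitrary: K U U' rule: less_induct)
  case less
  show ?case
    by (rule engel_step[OF _ less(1) radd rsc rhom less(2) less(3)]) (rule engel_m)
qed

end


inductive_set adgen :: "('v::ab_group_add \<Rightarrow> 'v) \<Rightarrow> ('v \<Rightarrow> 'v) \<Rightarrow> nat \<Rightarrow> ('v \<Rightarrow> 'v) set"
  for X Y k where
  zero: "(\<lambda>v. 0) \<in> adgen X Y k"
| gen: "i + j = k \<Longrightarrow> (\<lambda>v. (X^^i) (Y ((X^^j) v))) \<in> adgen X Y k"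
| diff: "Z1 \<in> adgen X Y k \<Longrightarrow> Z2 \<in> adgen X Y k \<Longrightarrow> (\<lambda>v. Z1 v - Z2 v) \<in> adgen X Y k"

lemma ad_step:
  assumes Xadd: "\<And>a b. X (a + b) = X a + X b"
    and Z: "Z \<in> adgen X Y k"
  shows "(\<lambda>v. X (Z v) - Z (X v)) \<in> adgen X Y (Suc k)"
  using Z
proof induction
  case zero
  have "X 0 = 0" using Xadd[of 0 0] by simp
  then show ?case using adgen.zero by simp
next
  case (gen i j)
  have "(\<lambda>v. X ((X ^^ i) (Y ((X ^^ j) v))) - (X ^^ i) (Y ((X ^^ j) (X v))))
      = (\<lambda>v. (X ^^ Suc i) (Y ((X ^^ j) v)) - (X ^^ i) (Y ((X ^^ Suc j) v)))"
    by (simp add: funpow_swap1)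
  moreover have "(\<lambda>v. (X ^^ Suc i) (Y ((X ^^ j) v)) - (X ^^ i) (Y ((X ^^ Suc j) v))) \<in> adgen X Y (Suc k)"
    by (rule adgen.diff[OF adgen.gen adgen.gen]) (use gen in simp_all)
  ultimately show ?case by simp
next
  case (diff Z1 Z2)
  have Xdiff: "X (a - b) = X a - X b" for a b using Xadd[of "a - b" b] by (simp add: algebra_simps)
  have "(\<lambda>v. X (Z1 v - Z2 v) - (Z1 (X v) - Z2 (X v))) = (\<lambda>v. (X (Z1 v) - Z1 (X v)) - (X (Z2 v) - Z2 (X v)))"
    by (simp add: Xdiff algebra_simps)
  then show ?case using adgen.diff[OF diff.IH] by simp
qed

lemma funpow_zero_fix: fixes X :: "'v::zero \<Rightarrow> 'v" shows "X 0 = 0 \<Longrightarrow> (X^^i) 0 = 0"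
  by (induction i) auto

lemma funpow_big:
  fixes X :: "'v::zero \<Rightarrow> 'v"
  assumes "(X^^n) = (\<lambda>_. 0)" "X 0 = 0" "n \<le> i"
  shows "(X^^i) w = 0"
proof -
  have "i = (i - n) + n" using assms(3) by simp
  then have "(X^^i) w = (X^^(i-n)) ((X^^n) w)" by (metis comp_apply funpow_add)
  then show ?thesis using assms funpow_zero_fix[of X] by simp
qed

lemma adgen_vanish:
  assumes Xn: "(X^^n) = (\<lambda>_. 0)" and X0: "X 0 = 0" and Y0: "Y 0 = (0::'v::ab_group_add)"
    and k: "2*n \<le> k" and Z: "Z \<in> adgen X Y k"
  shows "Z = (\<lambda>_. 0)"
  using Z
proof induction
  case zero then show ?case by simp
next
  case (gen i j)
  show ?case
  proof (cases "n \<le> j")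
    case True
    then show ?thesis using funpow_big[OF Xn X0] Y0 funpow_zero_fix[of X, OF X0] by (auto intro!: ext)
  next
    case False
    then have "n \<le> i" using gen k by simp
    then show ?thesis using funpow_big[OF Xn X0] by (auto intro!: ext)
  qed
next
  case (diff Z1 Z2) then show ?case by simp
qed

lemma ad_nil:
  assumes Xadd: "\<And>a b. X (a + b) = X a + X b" and Yadd: "\<And>a b. Y (a + b) = Y a + Y b"
    and Xn: "(X^^n) = (\<lambda>_. (0::'v::ab_group_add))"
  shows "((\<lambda>Z v. X (Z v) - Z (X v)) ^^ (2*n)) Y = (\<lambda>_. 0)"
proof -
  have X0: "X 0 = 0" using Xadd[of 0 0] by simp
  have Y0: "Y 0 = 0" using Yadd[of 0 0] by simp
  have "((\<lambda>Z v. X (Z v) - Z (X v)) ^^ k) Y \<in> adgen X Y k" for k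
  proof (induction k)
    case 0
    have "(\<lambda>v. (X^^0) (Y ((X^^0) v))) \<in> adgen X Y 0" by (rule adgen.gen) simp
    then show ?case by simp
  next
    case (Suc k)
    then show ?case using ad_step[OF Xadd] by simp
  qed
  then show ?thesis using adgen_vanish[where X=X and n=n and Y=Y and k="2*n", OF Xn X0 Y0] by blast
qed



lemma add_hom_facts:
  fixes f :: "'a::ab_group_add \<Rightarrow> 'b::ab_group_add"
  assumes "\<And>x y. f (x + y) = f x + f y"
  shows "f 0 = 0" "f (- x) = - f x" "f (x - y) = f x - f y"
proof -
  interpret additive f by unfold_locales (rule assms)
  show "f 0 = 0" "f (- x) = - f x" "f (x - y) = f x - f y" by (simp_all add: zero minus diff)
qed

theorem theorem2:
  fixes sL :: "'f::field \<Rightarrow> 'l::ab_group_add \<Rightarrow> 'l"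
    and sV :: "'f \<Rightarrow> 'v::ab_group_add \<Rightarrow> 'v"
    and m :: "'l \<Rightarrow> 'l \<Rightarrow> 'l"
    and T :: "'l \<Rightarrow> 'v \<Rightarrow> 'v"
    and S :: "'v \<Rightarrow> 'l \<Rightarrow> 'v"
  assumes vsL: "vector_space sL"
    and vsV: "vector_space sV"
    and finL: "\<exists>B. finite B \<and> module.span sL B = UNIV"
    and finV: "\<exists>B. finite B \<and> module.span sV B = UNIV"
    and m_lin1: "\<forall>a. Vector_Spaces.linear sL sL (m a)"
    and m_lin2: "\<forall>b. Vector_Spaces.linear sL sL (\<lambda>a. m a b)"
    and leibL: "left_leibniz m"
    and T_lin1: "\<forall>a. Vector_Spaces.linear sV sV (T a)"
    and T_lin2: "\<forall>v. Vector_Spaces.linear sL sV (\<lambda>a. T a v)"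
    and S_lin1: "\<forall>a. Vector_Spaces.linear sV sV (\<lambda>v. S v a)"
    and S_lin2: "\<forall>v. Vector_Spaces.linear sL sV (S v)"
    and bimod: "left_leibniz (split_ext_mult m T S)"
    and V_nonzero: "\<exists>v::'v. v \<noteq> 0"
    and T_nil: "\<forall>a. nilpotent_map (T a)"
  shows "(\<forall>a. nilpotent_map (\<lambda>v. S v a)) \<and>
         (\<exists>v. v \<noteq> 0 \<and> (\<forall>a. T a v = 0 \<and> S v a = 0))"
proof -
  have Tadd1: "\<And>a x y. T a (x + y) = T a x + T a y" and Tsc1: "\<And>a c x. T a (sV c x) = sV c (T a x)"
    using T_lin1[unfolded Vector_Spaces.linear_iff] by auto
  have Tadd2: "\<And>a b v. T (a + b) v = T a v + T b v" and Tsc2: "\<And>a c v. T (sL c a) v = sV c (T a v)"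
    using T_lin2[unfolded Vector_Spaces.linear_iff] by auto
  have Sadd1: "\<And>a x y. S (x + y) a = S x a + S y a"
    using S_lin1[unfolded Vector_Spaces.linear_iff] by auto
  have Sadd2: "\<And>a b v. S v (a + b) = S v a + S v b"
    using S_lin2[unfolded Vector_Spaces.linear_iff] by auto
  have madd1: "\<And>a x y. m a (x + y) = m a x + m a y" and msc1: "\<And>a c x. m a (sL c x) = sL c (m a x)"
    using m_lin1[unfolded Vector_Spaces.linear_iff] by auto
  have madd2: "\<And>a b v. m (a + b) v = m a v + m b v" and msc2: "\<And>a c v. m (sL c a) v = sL c (m a v)"
    using m_lin2[unfolded Vector_Spaces.linear_iff] by auto
  have T0: "T a 0 = 0" for a using Tadd1[of a 0 0] by simp
  have T0': "T 0 v = 0" for v using add_hom_facts(1)[of "\<lambda>a. T a v"] Tadd2 by blast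
  have S0: "S 0 a = 0" for a using add_hom_facts(1)[of "\<lambda>v. S v a"] Sadd1 by blast
  have Sneg: "S (- w) a = - S w a" for a w using add_hom_facts(2)[of "\<lambda>v. S v a"] Sadd1 by blast
  have Tdiff: "T (a - b) v = T a v - T b v" for a b v using add_hom_facts(3)[of "\<lambda>a. T a v"] Tadd2 by blast
  have Tdiff1: "T a (x - y) = T a x - T a y" for a x y using add_hom_facts(3)[of "T a"] Tadd1 by blast
  have B: "\<And>x y z. split_ext_mult m T S x (split_ext_mult m T S y z) =
     split_ext_mult m T S (split_ext_mult m T S x y) z + split_ext_mult m T S y (split_ext_mult m T S x z)"
    using bimod unfolding left_leibniz_def by blast
  have I: "T a (T b w) = T (m a b) w + T b (T a w)" for a b w
    using B[of "(0,a)" "(0,b)" "(w,c)"] by (simp add: split_ext_mult_def T0 S0)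
  have II: "T a (S v c) = S (T a v) c + S v (m a c)" for a v c
    using B[of "(0,a)" "(v,b)" "(0,c)"] by (simp add: split_ext_mult_def T0 S0)
  have III: "S u (m b c) = S (S u b) c + T b (S u c)" for u b c
    using B[of "(u,a)" "(0,b)" "(0,c)"] by (simp add: split_ext_mult_def T0 S0)
  have SS: "S (S u b) c = - S (T b u) c" for u b c
  proof -
    have "S u (m b c) = S (S u b) c + (S (T b u) c + S u (m b c))" using III II by simp
    then show ?thesis by (simp add: eq_neg_iff_add_eq_0 add.assoc[symmetric])
  qed
  \<comment> \<open>part 1\<close>
  have part1: "nilpotent_map (\<lambda>v. S v a)" for a
  proof -
    obtain n where n: "(T a ^^ n) = (\<lambda>_. 0)" using T_nil unfolding nilpotent_map_def by blast
    have P: "((\<lambda>v. S v a) ^^ Suc k) v = S ((T a ^^ k) v) a \<or> ((\<lambda>v. S v a) ^^ Suc k) v = - S ((T a ^^ k) v) a" for k v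
    proof (induction k)
      case 0 then show ?case by simp
    next
      case (Suc k)
      have e: "((\<lambda>v. S v a) ^^ Suc (Suc k)) v = S (((\<lambda>v. S v a) ^^ Suc k) v) a" by simp
      have e2: "(T a ^^ Suc k) v = T a ((T a ^^ k) v)" by simp
      from Suc.IH show ?case
      proof
        assume h: "((\<lambda>v. S v a) ^^ Suc k) v = S ((T a ^^ k) v) a"
        show ?thesis unfolding e e2 h SS[of "(T a ^^ k) v" a a] by simp
      next
        assume h: "((\<lambda>v. S v a) ^^ Suc k) v = - S ((T a ^^ k) v) a"
        show ?thesis unfolding e e2 h Sneg SS[of "(T a ^^ k) v" a a] by simp
      qed
    qed
    have "((\<lambda>v. S v a) ^^ Suc n) = (\<lambda>_. 0)"
      using P[of n] n S0 by (auto intro!: ext)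
    then show ?thesis unfolding nilpotent_map_def by blast
  qed
  \<comment> \<open>part 2\<close>
  interpret L: vector_space sL by (rule vsL)
  interpret V: vector_space sV by (rule vsV)
  obtain B0 where B0: "finite B0" "L.span B0 = UNIV" using finL by blast
  obtain Bs where Bs: "L.independent Bs" "UNIV \<subseteq> L.span Bs" using L.basis_exists[of UNIV] by blast
  have "finite Bs" using L.independent_span_bound[OF B0(1) Bs(1)] B0(2) by auto
  then interpret L: finite_dimensional_vector_space sL Bs
    using Bs by unfold_locales auto
  define J where "J = {a. \<forall>v. T a v = 0}"
  have Tm: "T (m a b) w = T a (T b w) - T b (T a w)" for a b w using I[of a b w] by (simp add: algebra_simps)
  interpret E: engel_ctx sL Bs m J
  proof unfold_locales
    show "\<And>x y z. m (x + y) z = m x z + m y z" by (rule madd2)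
    show "\<And>c x z. m (sL c x) z = sL c (m x z)" by (rule msc2)
    show "\<And>x y z. m z (x + y) = m z x + m z y" by (rule madd1)
    show "\<And>c x z. m z (sL c x) = sL c (m z x)" by (rule msc1)
    show "\<And>x y z. m x (m y z) = m (m x y) z + m y (m x z)" using leibL unfolding left_leibniz_def by blast
    show "L.subspace J" unfolding L.subspace_def J_def
      using T0' Tadd2 Tsc2 V.scale_zero_right by simp
    show "\<And>j u. j \<in> J \<Longrightarrow> m j u \<in> J" unfolding J_def using Tm T0 by simp
    show "\<And>j u. j \<in> J \<Longrightarrow> m u j \<in> J" unfolding J_def using Tm T0 by simp
    show "\<And>a. m a a \<in> J" unfolding J_def using Tm by simp
    show "\<And>a b. m a b + m b a \<in> J" unfolding J_def using Tm Tadd2 by simp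
    show "\<And>a b. \<exists>k. (m b ^^ k) a \<in> J"
    proof -
      fix a b
      obtain n where n: "(T b ^^ n) = (\<lambda>_. 0)" using T_nil unfolding nilpotent_map_def by blast
      let ?ad = "\<lambda>Z v. T b (Z v) - Z (T b v)"
      have "T ((m b ^^ k) a) = (?ad ^^ k) (T a)" for k
      proof (induction k)
        case 0 show ?case by simp
      next
        case (Suc k)
        have "T ((m b ^^ Suc k) a) = (\<lambda>w. T b (T ((m b ^^ k) a) w) - T ((m b ^^ k) a) (T b w))"
          by (rule ext) (simp only: funpow.simps comp_apply Tm)
        also have "\<dots> = ?ad ((?ad ^^ k) (T a))" by (simp only: Suc.IH)
        also have "\<dots> = (?ad ^^ Suc k) (T a)" by (simp only: funpow.simps comp_apply)
        finally show ?case .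
      qed
      note eq = this[of "2*n"]
      have an: "(?ad ^^ (2*n)) (T a) = (\<lambda>_. 0)"
        by (rule ad_nil[where X="T b" and Y="T a" and n=n]) (use Tadd1 n in auto)
      have "T ((m b ^^ (2*n)) a) = (\<lambda>_. 0)" unfolding eq an ..
      then have "\<forall>v. T ((m b ^^ (2*n)) a) v = 0" by simp
      then show "\<exists>k. (m b ^^ k) a \<in> J" unfolding J_def by blast
    qed
  qed
  have Kc: "E.Kcond UNIV" unfolding E.Kcond_def by simp
  have Tsum: "\<And>x y w. T (x+y) w = T x w + T y w" by (rule Tadd2)
  have Thom: "\<And>x y w. T x (T y w) = T (m x y) w + T y (T x w)" by (rule I)
  have engel: "\<exists>u\<in>U. u \<noteq> 0 \<and> (\<forall>b. T b u = 0)"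
    if U1: "\<exists>u\<in>U. u \<noteq> 0" and U2: "\<forall>a. \<forall>u\<in>U. T a u \<in> U" for U
  proof -
    have "E.Ucond sV T UNIV U {0}" unfolding E.Ucond_def
    proof (intro conjI)
      show "\<forall>x\<in>{0}. \<forall>y\<in>{0}. x + y \<in> {0::'v}" by simp
      show "\<forall>c. \<forall>x\<in>{0}. sV c x \<in> {0}" using V.scale_zero_right by simp
      show "\<exists>u\<in>U. u \<notin> {0}" using U1 by simp
      show "\<forall>a\<in>UNIV. \<forall>u\<in>U. T a u \<in> U" using U2 by simp
      show "\<forall>a\<in>UNIV. \<forall>u\<in>{0}. T a u \<in> {0}" using T0 by simp
      show "\<forall>j\<in>J. \<forall>u\<in>U. T j u \<in> {0}" unfolding J_def by simp
      show "\<forall>a\<in>UNIV. \<forall>u\<in>U. \<exists>k. (T a ^^ k) u \<in> {0}"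
      proof (intro ballI)
        fix a u
        obtain k where "(T a ^^ k) = (\<lambda>_. 0)" using T_nil unfolding nilpotent_map_def by blast
        then have "(T a ^^ k) u \<in> {0}" by simp
        then show "\<exists>k. (T a ^^ k) u \<in> {0}" by blast
      qed
    qed
    from E.engel_gen[OF Tsum Tsc2 Thom Kc this] show ?thesis unfolding E.Concl_def by auto
  qed
  obtain v where v: "v \<noteq> 0" "\<forall>b. T b v = 0" using engel[of UNIV] V_nonzero by auto
  have part2: "\<exists>v. v \<noteq> 0 \<and> (\<forall>a. T a v = 0 \<and> S v a = 0)"
  proof (cases "\<forall>a. S v a = 0")
    case True then show ?thesis using v by blast
  next
    case False
    then obtain b where b: "S v b \<noteq> 0" by blast
    define Z where "Z = {u. \<forall>c. S u c = 0}"
    have "S v b \<in> Z" unfolding Z_def using SS[of v b] v(2) S0 by simp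
    moreover have "\<forall>a. \<forall>u\<in>Z. T a u \<in> Z" unfolding Z_def
    proof (intro allI ballI CollectI)
      fix a u c assume "u \<in> {u. \<forall>c. S u c = 0}"
      then have "\<forall>c. S u c = 0" by simp
      then show "S (T a u) c = 0" using II[of a u c] T0 by simp
    qed
    ultimately obtain u where "u \<in> Z" "u \<noteq> 0" "\<forall>b. T b u = 0" using engel[of Z] b by blast
    then show ?thesis unfolding Z_def by blast
  qed
  show ?thesis using part1 part2 by blast
qed

end
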